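(* Let $n\in\mathbb N$ and let $\xi_n:S^1\to M_n(\mathbb C)$ be given by $\xi_n(z)_{ij}=z^{j-i}$ ($1\le i,j\le n$). Then $\xi_n$ is pure in the convex cone $\left(C(S^1)^{(n)}\otimes_{\min}C(S^1)_{(n)}\right)_+$: whenever $\xi_n=y+w$ with $y,w$ in this cone, there is $\lambda\in[0,1]$ with $w=\lambda\xi_n$ and $y=(1-\lambda)\xi_n$.
   Context: $C(S^1)^{(n)}\subseteq M_n(\mathbb C)$ is the space of Toeplitz matrices $[\tau_{k-\ell}]$. $C(S^1)_{(n)}$ is the space of continuous functions $f$ on the unit circle $S^1$ with Fourier coefficients $\hat f(k)=0$ for $|k|\ge n$. $C(S^1)^{(n)}\otimes_{\min}C(S^1)_{(n)}$ is identified with the space of continuous functions $F:S^1\to C(S^1)^{(n)}$ whose entries lie in $C(S^1)_{(n)}$ (with $t\otimes f\leftrightarrow z\mapsto f(z)t$), and its positive cone consists of those $F$ with $F(z)$ positive semidefinite for all $z\in S^1$. Note $\xi_n=\sum_{k=-n+1}^{n-1} r_k\otimes z^{-k}$, where $r_k=s^k$ for $k\ge0$, $r_k=(s^* )^{-k}$ for $k<0$, $s$ the lower-triangular shift matrix. *)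

theory Defs
  imports "HOL-Analysis.Analysis"
begin

definition S1 :: "complex set" where
  "S1 = sphere 0 1"

definition fourier_coeff :: "(complex \<Rightarrow> complex) \<Rightarrow> int \<Rightarrow> complex" where
  "fourier_coeff f k =
     integral {0..2*pi} (\<lambda>t. f (cis t) * cis (- (of_int k * t))) / complex_of_real (2*pi)"

definition trig_n :: "nat \<Rightarrow> (complex \<Rightarrow> complex) \<Rightarrow> bool" where
  "trig_n n f \<longleftrightarrow> continuous_on S1 f \<and>
     (\<forall>k::int. \<bar>k\<bar> \<ge> int n \<longrightarrow> fourier_coeff f k = 0)"

text \<open>n x n matrices are represented as functions nat => nat => complex, indices 0..n-1.\<close>
definition toeplitz_mat :: "nat \<Rightarrow> (nat \<Rightarrow> nat \<Rightarrow> complex) \<Rightarrow> bool" where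
  "toeplitz_mat n A \<longleftrightarrow> (\<forall>i j i' j'. i < n \<longrightarrow> j < n \<longrightarrow> i' < n \<longrightarrow> j' < n \<longrightarrow>
      int j - int i = int j' - int i' \<longrightarrow> A i j = A i' j')"

definition psd_mat :: "nat \<Rightarrow> (nat \<Rightarrow> nat \<Rightarrow> complex) \<Rightarrow> bool" where
  "psd_mat n A \<longleftrightarrow> (\<forall>v :: nat \<Rightarrow> complex.
      let q = (\<Sum>i<n. \<Sum>j<n. cnj (v i) * A i j * v j) in Im q = 0 \<and> Re q \<ge> 0)"

text \<open>Positive cone of C(S^1)^(n) \<otimes>_min C(S^1)_(n), viewed as functions S^1 -> Toeplitz matrices
  with entries in C(S^1)_(n), positive semidefinite at every point.\<close>
definition pos_cone :: "nat \<Rightarrow> (complex \<Rightarrow> nat \<Rightarrow> nat \<Rightarrow> complex) \<Rightarrow> bool" where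
  "pos_cone n F \<longleftrightarrow>
     (\<forall>i<n. \<forall>j<n. trig_n n (\<lambda>z. F z i j)) \<and>
     (\<forall>z\<in>S1. toeplitz_mat n (F z)) \<and>
     (\<forall>z\<in>S1. psd_mat n (F z))"

definition xi :: "complex \<Rightarrow> nat \<Rightarrow> nat \<Rightarrow> complex" where
  "xi z i j = z powi (int j - int i)"

end

theory Submission
  imports Defs
begin


lemma core:
  fixes Apq Aqp c u :: complex
  assumes u: "cnj u * u = 1"
    and cr: "Im c = 0"
    and QA: "\<And>a b. Im (cnj a * c * a + cnj a * Apq * b + cnj b * Aqp * a + cnj b * c * b) = 0 \<and>
                   Re (cnj a * c * a + cnj a * Apq * b + cnj b * Aqp * a + cnj b * c * b) \<ge> 0"
    and QB: "\<And>a b. Im (cnj a * (1-c) * a + cnj a * (u - Apq) * b + cnj b * (cnj u - Aqp) * a + cnj b * (1-c) * b) = 0 \<and>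
                   Re (cnj a * (1-c) * a + cnj a * (u - Apq) * b + cnj b * (cnj u - Aqp) * a + cnj b * (1-c) * b) \<ge> 0"
  shows "Apq = c * u"
proof -
  have h1: "Im Apq + Im Aqp = 0" using QA[of 1 1] cr by simp
  have h2: "Re Apq - Re Aqp = 0" using QA[of 1 \<i>] cr by simp
  have herm: "Aqp = cnj Apq" using h1 h2 by (simp add: complex_eq_iff)
  define m where "m = cnj u * Apq"
  have uu: "u * cnj u = 1" using u by (simp add: mult.commute)
  have QAl: "cnj a * c * a + cnj a * Apq * b + cnj b * Aqp * a + cnj b * c * b = 2 * c + l * m + cnj (l * m)"
    if "cnj l * l = 1" "a = 1" "b = l * cnj u" for a b l
  proof -
    have "cnj b * c * b = c * (cnj l * l) * (cnj u * u)" using that by (simp add: algebra_simps)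
    also have "\<dots> = c" using that u by simp
    finally show ?thesis using that herm by (simp add: m_def algebra_simps)
  qed
  have QBl: "cnj a * (1-c) * a + cnj a * (u - Apq) * b + cnj b * (cnj u - Aqp) * a + cnj b * (1-c) * b
      = 2 * (1 - c) + l + cnj l - l * m - cnj (l * m)"
    if "cnj l * l = 1" "a = 1" "b = l * cnj u" for a b l
  proof -
    have bb: "cnj b * b = (cnj l * l) * (cnj u * u)" using that by (simp add: ac_simps)
    have e: "cnj b * (1-c) * b = 1 - c"
      by (metis bb that(1) u mult.commute mult.left_commute mult_1 mult_1_right)
    have e2: "cnj a * (u - Apq) * b = l * (u * cnj u) - l * m" using that by (simp add: m_def algebra_simps)
    have e3: "cnj b * (cnj u - Aqp) * a = cnj l * (u * cnj u) - cnj (l * m)" using that herm by (simp add: m_def algebra_simps)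
    have e1: "cnj a * (1-c) * a = 1 - c" using that by simp
    show ?thesis unfolding e e1 e2 e3 uu by simp
  qed
  have l1: "cnj (-1::complex) * -1 = 1" by simp
  have "0 \<le> Re (2 * (1 - c) + (-1) + cnj (-1) - (-1) * m - cnj ((-1) * m))"
    using QB[of 1 "-1 * cnj u"] unfolding QBl[OF l1 refl refl] by blast
  then have r1: "Re m \<ge> Re c" by simp
  have r2: "cmod m \<le> Re c"
  proof (cases "m = 0")
    case True then show ?thesis using QA[of 1 0] cr by simp
  next
    case False
    define l where "l = - cnj m / cmod m"
    have ll: "cnj l * l = 1" using False by (simp add: l_def complex_norm_square[symmetric] power2_eq_square)
    have nm: "cnj m * m = of_real (cmod m)^2"
      by (metis complex_norm_square mult.commute of_real_power)
    have "l * m = - (cnj m * m) / cmod m" by (simp add: l_def)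
    also have "\<dots> = - cmod m" unfolding nm using False by (simp add: power2_eq_square)
    finally have lm: "l * m = - cmod m" .
    have "0 \<le> Re (2 * c + l * m + cnj (l * m))"
      using QA[of 1 "l * cnj u"] unfolding QAl[OF ll refl refl] by blast
    then show ?thesis unfolding lm by simp
  qed
  have "Im m = 0" "Re m = Re c"
    using r1 r2 complex_Re_le_cmod[of m] abs_Im_le_cmod[of m]
    apply -
    subgoal proof -
      assume a: "Re c \<le> Re m" "cmod m \<le> Re c" "Re m \<le> cmod m"
      then have "Re m = cmod m" by linarith
      then have "(Re m)^2 = (Re m)^2 + (Im m)^2" using cmod_power2[of m] by simp
      then show "Im m = 0" by simp
    qed
    subgoal by linarith
    done
  then have "m = c" using cr by (simp add: complex_eq_iff)
  then have "u * m = c * u" by simp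
  then show ?thesis using uu by (simp add: m_def mult.assoc[symmetric])
qed


lemma sum_two_supp:
  fixes f :: "nat \<Rightarrow> complex"
  assumes "p < n" "q < n" "p \<noteq> q"
  shows "(\<Sum>j<n. f j * (if j = p then a else if j = q then b else 0)) = f p * a + f q * b"
proof -
  have "(\<Sum>j<n. f j * (if j = p then a else if j = q then b else 0))
      = (\<Sum>j\<in>{p,q}. f j * (if j = p then a else if j = q then b else 0))"
    by (rule sum.mono_neutral_right) (use assms in auto)
  also have "\<dots> = f p * a + f q * b" using assms by simp
  finally show ?thesis .
qed

lemma sum_one_supp:
  fixes f :: "nat \<Rightarrow> complex"
  assumes "p < n"
  shows "(\<Sum>j<n. f j * (if j = p then a else 0)) = f p * a"
proof -
  have "(\<Sum>j<n. f j * (if j = p then a else 0)) = (\<Sum>j\<in>{p}. f j * (if j = p then a else 0))"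
    by (rule sum.mono_neutral_right) (use assms in auto)
  then show ?thesis by simp
qed

lemma psd_two:
  assumes "psd_mat n A" "p < n" "q < n" "p \<noteq> q"
  shows "Im (cnj a * A p p * a + cnj a * A p q * b + cnj b * A q p * a + cnj b * A q q * b) = 0 \<and>
         Re (cnj a * A p p * a + cnj a * A p q * b + cnj b * A q p * a + cnj b * A q q * b) \<ge> 0"
    (is "Im ?goalterm = 0 \<and> _")
proof -
  define v where "v = (\<lambda>k. if k = p then a else if k = q then b else 0)"
  have inner: "(\<Sum>j<n. cnj (v i) * A i j * v j) = (A i p * a + A i q * b) * cnj (v i)" for i
  proof -
    have "(\<Sum>j<n. cnj (v i) * A i j * v j) = cnj (v i) * (\<Sum>j<n. A i j * v j)"
      by (simp add: sum_distrib_left mult.assoc)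
    also have "(\<Sum>j<n. A i j * v j) = A i p * a + A i q * b"
      unfolding v_def by (rule sum_two_supp[OF assms(2-4)])
    finally show ?thesis by simp
  qed
  have "(\<Sum>i<n. \<Sum>j<n. cnj (v i) * A i j * v j) = (\<Sum>i<n. (A i p * a + A i q * b) * cnj (v i))"
    by (simp add: inner)
  also have "\<dots> = (A p p * a + A p q * b) * cnj a + (A q p * a + A q q * b) * cnj b"
  proof -
    have cv: "cnj (v i) = (if i = p then cnj a else if i = q then cnj b else 0)" for i
      by (simp add: v_def)
    show ?thesis unfolding cv by (rule sum_two_supp[OF assms(2-4)])
  qed
  also have "\<dots> = cnj a * A p p * a + cnj a * A p q * b + cnj b * A q p * a + cnj b * A q q * b"
    by (simp add: algebra_simps)
  finally have eq: "(\<Sum>i<n. \<Sum>j<n. cnj (v i) * A i j * v j) = ?goalterm" .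
  have "Im (\<Sum>i<n. \<Sum>j<n. cnj (v i) * A i j * v j) = 0 \<and> Re (\<Sum>i<n. \<Sum>j<n. cnj (v i) * A i j * v j) \<ge> 0"
    using assms(1) unfolding psd_mat_def Let_def by blast
  then show ?thesis unfolding eq .
qed

lemma psd_one:
  assumes "psd_mat n A" "p < n"
  shows "Im (A p p) = 0 \<and> Re (A p p) \<ge> 0"
    (is "Im ?goalterm = 0 \<and> _")
proof -
  define v where "v = (\<lambda>k. if k = p then (1::complex) else 0)"
  have inner: "(\<Sum>j<n. cnj (v i) * A i j * v j) = A i p * cnj (v i)" for i
  proof -
    have "(\<Sum>j<n. cnj (v i) * A i j * v j) = cnj (v i) * (\<Sum>j<n. A i j * v j)"
      by (simp add: sum_distrib_left mult.assoc)
    also have "(\<Sum>j<n. A i j * v j) = A i p * 1"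
      unfolding v_def by (rule sum_one_supp[OF assms(2)])
    finally show ?thesis by simp
  qed
  have "(\<Sum>i<n. \<Sum>j<n. cnj (v i) * A i j * v j) = (\<Sum>i<n. A i p * cnj (v i))"
    by (simp add: inner)
  also have "\<dots> = A p p"
  proof -
    have cv: "cnj (v i) = (if i = p then 1 else 0)" for i
      by (simp add: v_def)
    show ?thesis unfolding cv using sum_one_supp[OF assms(2), of "\<lambda>i. A i p" 1] by simp
  qed
  finally have eq: "(\<Sum>i<n. \<Sum>j<n. cnj (v i) * A i j * v j) = ?goalterm" .
  have "Im (\<Sum>i<n. \<Sum>j<n. cnj (v i) * A i j * v j) = 0 \<and> Re (\<Sum>i<n. \<Sum>j<n. cnj (v i) * A i j * v j) \<ge> 0"
    using assms(1) unfolding psd_mat_def Let_def by blast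
  then show ?thesis unfolding eq .
qed



lemma S1_norm: "z \<in> S1 \<Longrightarrow> cmod z = 1"
  by (simp add: S1_def)

lemma xi_cnj:
  assumes "cmod z = 1"
  shows "cnj (xi z i j) = xi z j i" and "cnj (xi z i j) * xi z i j = 1" and "xi z i i = 1"
proof -
  have z0: "z \<noteq> 0" using assms by auto
  have "z * cnj z = 1" using complex_norm_square[of z] assms by simp
  then have cz: "cnj z = inverse z" by (rule inverse_unique[symmetric])
  have c1: "cnj (xi z i j) = inverse (xi z i j)"
    unfolding xi_def complex_cnj_power_int cz power_int_inverse ..
  have "inverse (xi z i j) = xi z j i"
    unfolding xi_def power_int_minus[symmetric] by simp
  then show "cnj (xi z i j) = xi z j i" using c1 by simp
  have "xi z i j \<noteq> 0" using z0 unfolding xi_def by simp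
  then show "cnj (xi z i j) * xi z i j = 1" unfolding c1 by simp
  show "xi z i i = 1" by (simp add: xi_def)
qed

lemma pointwise:
  assumes py: "pos_cone n y" and pw: "pos_cone n w"
    and sm: "\<forall>z\<in>S1. \<forall>i<n. \<forall>j<n. xi z i j = y z i j + w z i j"
    and z: "z \<in> S1" and ij: "i < n" "j < n"
  shows "w z i j = w z 0 0 * xi z i j"
proof -
  have zn: "cmod z = 1" using z S1_norm by blast
  define c where "c = w z 0 0"
  have n0: "0 < n" using ij by simp
  have tw: "toeplitz_mat n (w z)" and ty: "toeplitz_mat n (y z)"
    and psw: "psd_mat n (w z)" and psy: "psd_mat n (y z)"
    using pw py z unfolding pos_cone_def by auto
  have diag: "w z k k = c" if "k < n" for k
    using tw[unfolded toeplitz_mat_def, rule_format, of k k 0 0] that n0 unfolding c_def by simp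
  have cr: "Im c = 0" using psd_one[OF psw n0] c_def by simp
  show ?thesis
  proof (cases "i = j")
    case True
    have "w z i i = c" by (rule diag[OF ij(1)])
    then show ?thesis using True xi_cnj(3)[OF zn] by (simp add: c_def)
  next
    case False
    define u where "u = xi z i j"
    have ycalc: "y z k l = xi z k l - w z k l" if "k < n" "l < n" for k l
    proof -
      have "xi z k l = y z k l + w z k l" using sm z that by blast
      then show ?thesis by simp
    qed
    have "w z i j = c * u"
    proof (rule core)
      show "cnj u * u = 1" unfolding u_def by (rule xi_cnj(2)[OF zn])
      show "Im c = 0" by (rule cr)
      fix a b
      show "Im (cnj a * c * a + cnj a * w z i j * b + cnj b * w z j i * a + cnj b * c * b) = 0 \<and>
            0 \<le> Re (cnj a * c * a + cnj a * w z i j * b + cnj b * w z j i * a + cnj b * c * b)"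
        using psd_two[OF psw ij False, of a b] unfolding diag[OF ij(1)] diag[OF ij(2)] .
      have e: "y z i i = 1 - c" "y z j j = 1 - c" "y z i j = u - w z i j" "y z j i = cnj u - w z j i"
        unfolding ycalc[OF ij(1) ij(1)] ycalc[OF ij(2) ij(2)] ycalc[OF ij(1) ij(2)] ycalc[OF ij(2) ij(1)]
          diag[OF ij(1)] diag[OF ij(2)] xi_cnj(3)[OF zn] u_def xi_cnj(1)[OF zn] by simp_all
      show "Im (cnj a * (1 - c) * a + cnj a * (u - w z i j) * b + cnj b * (cnj u - w z j i) * a + cnj b * (1 - c) * b) = 0 \<and>
            0 \<le> Re (cnj a * (1 - c) * a + cnj a * (u - w z i j) * b + cnj b * (cnj u - w z j i) * a + cnj b * (1 - c) * b)"
        using psd_two[OF psy ij False, of a b] unfolding e .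
    qed
    then show ?thesis unfolding c_def u_def .
  qed
qed

lemma pointwise_c:
  assumes py: "pos_cone n y" and pw: "pos_cone n w"
    and sm: "\<forall>z\<in>S1. \<forall>i<n. \<forall>j<n. xi z i j = y z i j + w z i j"
    and z: "z \<in> S1" and n0: "0 < n"
  shows "w z 0 0 = of_real (Re (w z 0 0))" "0 \<le> Re (w z 0 0)" "Re (w z 0 0) \<le> 1"
proof -
  have zn: "cmod z = 1" using z S1_norm by blast
  have psw: "psd_mat n (w z)" and psy: "psd_mat n (y z)"
    using pw py z unfolding pos_cone_def by auto
  have "xi z 0 0 = y z 0 0 + w z 0 0" using sm z n0 by blast
  then have "y z 0 0 = 1 - w z 0 0" using xi_cnj(3)[OF zn] by (simp add: eq_diff_eq)
  then show "w z 0 0 = of_real (Re (w z 0 0))" "0 \<le> Re (w z 0 0)" "Re (w z 0 0) \<le> 1"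
    using psd_one[OF psw n0] psd_one[OF psy n0] by (simp_all add: complex_eq_iff)
qed



lemma cis_vd:
  "((\<lambda>t. cis (of_int m * t)) has_vector_derivative (of_int m * (\<i> * cis (of_int m * t)))) (at t within S)"
proof -
  have "((\<lambda>t. cis (of_int m * t)) has_derivative (\<lambda>h. (of_int m * h) *\<^sub>R (\<i> * cis (of_int m * t)))) (at t within S)"
    by (intro has_derivative_cis derivative_intros)
  moreover have "(\<lambda>h. (of_int m * h) *\<^sub>R (\<i> * cis (of_int m * t))) = (\<lambda>h. h *\<^sub>R (of_int m * (\<i> * cis (of_int m * t))))"
    by (auto simp: scaleR_conv_of_real)
  ultimately show ?thesis by (simp add: has_vector_derivative_def)
qed

lemma int_cis:
  fixes m :: int assumes "m \<noteq> 0"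
  shows "((\<lambda>t. cis (of_int m * t)) has_integral 0) {0..2*pi}"
proof -
  define F where "F = (\<lambda>t. cis (of_int m * t) / (\<i> * of_int m))"
  have "(F has_vector_derivative cis (of_int m * t)) (at t within {0..2*pi})" for t
  proof -
    have "((\<lambda>t. cis (of_int m * t) / (\<i> * of_int m)) has_vector_derivative
          (of_int m * (\<i> * cis (of_int m * t))) / (\<i> * of_int m)) (at t within {0..2*pi})"
      using cis_vd[of m t] by (rule has_vector_derivative_divide) 
    then show ?thesis unfolding F_def using assms by simp
  qed
  then have "((\<lambda>t. cis (of_int m * t)) has_integral (F (2*pi) - F 0)) {0..2*pi}"
    by (intro fundamental_theorem_of_calculus) auto
  moreover have "cis (of_int m * (2*pi)) = 1"
    using cis_multiple_2pi[of "of_int m"] by (simp add: mult.commute mult.left_commute)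
  ultimately show ?thesis by (simp add: F_def)
qed



lemma iid: "(x::complex) * p + y * q = (p - \<i>*q)/2 * (x + \<i>*y) + (p + \<i>*q)/2*(x - \<i>*y)"
proof -
  have "(p - \<i>*q) * (x + \<i>*y) + (p + \<i>*q)*(x - \<i>*y) = 2 * (x * p + y * q) - 2 * (\<i>*\<i> + 1) * q * y"
    by (simp add: algebra_simps)
  also have "\<i>*\<i> + 1 = 0" by simp
  finally show ?thesis by (simp add: add_divide_distrib[symmetric] mult.assoc)
qed

inductive trigp :: "(real \<Rightarrow> complex) \<Rightarrow> bool" where
  basic: "trigp (\<lambda>t. a * cis (of_int k * t))"
| add: "trigp f \<Longrightarrow> trigp g \<Longrightarrow> trigp (\<lambda>t. f t + g t)"

lemma trigp_mult_basic:
  assumes "trigp g"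
  shows "trigp (\<lambda>t. (a * cis (of_int k * t)) * g t)"
  using assms
proof induction
  case (basic b l)
  have "(\<lambda>t. (a * cis (of_int k * t)) * (b * cis (of_int l * t))) = (\<lambda>t. (a * b) * cis (of_int (k + l) * t))"
    by (auto simp: cis_mult[symmetric] algebra_simps)
  then show ?case by (simp only:) (rule trigp.basic)
next
  case (add f g)
  have "(\<lambda>t. a * cis (of_int k * t) * (f t + g t)) = (\<lambda>t. a * cis (of_int k * t) * f t + a * cis (of_int k * t) * g t)"
    by (simp add: distrib_left)
  then show ?case by (simp only:) (rule trigp.add[OF add.IH])
qed

lemma trigp_mult:
  assumes "trigp f" "trigp g"
  shows "trigp (\<lambda>t. f t * g t)"
  using assms
proof (induction arbitrary: g)
  case (basic a k)
  then show ?case by (rule trigp_mult_basic)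
next
  case (add f1 f2)
  have "(\<lambda>t. (f1 t + f2 t) * g t) = (\<lambda>t. f1 t * g t + f2 t * g t)"
    by (simp add: distrib_right)
  then show ?case by (simp only:) (rule trigp.add[OF add.IH(1)[OF add.prems] add.IH(2)[OF add.prems]])
qed

lemma trigp_cont: "trigp f \<Longrightarrow> continuous_on A f"
  by (induction rule: trigp.induct) (auto intro!: continuous_intros)

lemma trigp_poly:
  fixes p :: "complex \<Rightarrow> real"
  assumes "real_polynomial_function p"
  shows "trigp (\<lambda>t. complex_of_real (p (cis t)))"
  using assms
proof induction
  case (linear f)
  have fz: "f z = Re z * f 1 + Im z * f \<i>" for z
  proof -
    have "z = Re z *\<^sub>R 1 + Im z *\<^sub>R \<i>" by (simp add: complex_eq_iff)
    then have "f z = f (Re z *\<^sub>R 1 + Im z *\<^sub>R \<i>)" by (rule arg_cong)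
    also have "\<dots> = Re z * f 1 + Im z * f \<i>"
      using linear.hyps by (simp add: bounded_linear.linear linear_add linear_scale)
    finally show ?thesis .
  qed
  define A where "A = (complex_of_real (f 1) - \<i> * complex_of_real (f \<i>)) / 2"
  define B where "B = (complex_of_real (f 1) + \<i> * complex_of_real (f \<i>)) / 2"
  have "(\<lambda>t. complex_of_real (f (cis t))) = (\<lambda>t. A * cis (of_int 1 * t) + B * cis (of_int (-1) * t))"
  proof
    fix t
    have c1: "cis (of_int 1 * t) = complex_of_real (cos t) + \<i> * complex_of_real (sin t)"
      by (simp add: complex_eq_iff)
    have c2: "cis (of_int (-1) * t) = complex_of_real (cos t) - \<i> * complex_of_real (sin t)"
      by (simp add: complex_eq_iff)
    have f: "complex_of_real (f (cis t)) = complex_of_real (cos t) * complex_of_real (f 1) + complex_of_real (sin t) * complex_of_real (f \<i>)"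
      unfolding fz[of "cis t"] by simp
    show "complex_of_real (f (cis t)) = A * cis (of_int 1 * t) + B * cis (of_int (-1) * t)"
      unfolding f c1 c2 A_def B_def by (rule iid)
  qed
  then show ?case by (simp only:) (rule trigp.add[OF trigp.basic trigp.basic])
next
  case (const c)
  have "(\<lambda>t. complex_of_real c) = (\<lambda>t. complex_of_real c * cis (of_int 0 * t))" by simp
  then show ?case by (simp only:) (rule trigp.basic)
next
  case (add f g)
  then show ?case using trigp.add[OF add.IH] by (simp add: of_real_add)
next
  case (mult f g)
  then show ?case using trigp_mult[OF mult.IH] by (simp add: of_real_mult)
qed


lemma trigp_orth:
  fixes G :: "complex \<Rightarrow> real"
  assumes contG: "continuous_on {0..2*pi} (\<lambda>t. G (cis t))"
    and fc: "\<And>m::int. integral {0..2*pi} (\<lambda>t. complex_of_real (G (cis t)) * cis (of_int m * t)) = 0"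
    and tf: "trigp f"
  shows "integral {0..2*pi} (\<lambda>t. complex_of_real (G (cis t)) * f t) = 0"
  using tf
proof induction
  case (basic a k)
  have "(\<lambda>t. complex_of_real (G (cis t)) * (a * cis (of_int k * t))) =
        (\<lambda>t. a * (complex_of_real (G (cis t)) * cis (of_int k * t)))"
    by (simp add: ac_simps)
  then show ?case using fc[of k] by (simp only: integral_mult_right) simp
next
  case (add f g)
  have cG: "continuous_on {0..2*pi} (\<lambda>t. complex_of_real (G (cis t)))"
    using contG by (intro continuous_intros)
  have i1: "(\<lambda>t. complex_of_real (G (cis t)) * f t) integrable_on {0..2*pi}"
    by (intro integrable_continuous_interval continuous_intros cG trigp_cont add.hyps)
  have i2: "(\<lambda>t. complex_of_real (G (cis t)) * g t) integrable_on {0..2*pi}"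
    by (intro integrable_continuous_interval continuous_intros cG trigp_cont add.hyps)
  have "(\<lambda>t. complex_of_real (G (cis t)) * (f t + g t)) =
        (\<lambda>t. complex_of_real (G (cis t)) * f t + complex_of_real (G (cis t)) * g t)"
    by (simp add: distrib_left)
  then show ?case using integral_add[OF i1 i2] add.IH by simp
qed

lemma S1_cis: "z \<in> S1 \<Longrightarrow> \<exists>t\<in>{0..2*pi}. z = cis t"
proof -
  assume z: "z \<in> S1"
  then have zn: "cmod z = 1" by (simp add: S1_def)
  then have z0: "z \<noteq> 0" by auto
  have ca: "cis (Arg z) = z" using cis_Arg[OF z0] zn by (simp add: sgn_eq)
  show ?thesis
  proof (cases "Arg z \<ge> 0")
    case True
    then show ?thesis using Arg_bounded[of z] ca
      by (intro bexI[of _ "Arg z"]) auto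
  next
    case False
    have "cis (Arg z + 2*pi) = z" using ca by (simp add: cis_mult[symmetric])
    then show ?thesis using Arg_bounded[of z] False
      by (intro bexI[of _ "Arg z + 2*pi"]) auto
  qed
qed

lemma uniq:
  fixes G :: "complex \<Rightarrow> real"
  assumes cont: "continuous_on S1 G"
    and fc: "\<And>m::int. integral {0..2*pi} (\<lambda>t. complex_of_real (G (cis t)) * cis (of_int m * t)) = 0"
    and z: "z \<in> S1"
  shows "G z = 0"
proof -
  have cisS1: "cis t \<in> S1" for t by (simp add: S1_def)
  have contG: "continuous_on {0..2*pi} (\<lambda>t. G (cis t))"
    by (rule continuous_on_compose2[OF cont]) (auto intro!: continuous_intros simp: cisS1)
  have compS: "compact S1" by (simp add: S1_def)
  have "bounded (G ` S1)" by (intro compact_imp_bounded compact_continuous_image cont compS)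
  then obtain B where B: "B > 0" "\<And>x. x \<in> S1 \<Longrightarrow> \<bar>G x\<bar> \<le> B"
    unfolding bounded_pos by auto
  define J where "J = integral {0..2*pi} (\<lambda>t. G (cis t) * G (cis t))"
  have iGG: "(\<lambda>t. G (cis t) * G (cis t)) integrable_on {0..2*pi}"
    by (intro integrable_continuous_interval continuous_intros contG)
  have Jle: "J \<le> 2*pi*B*e" if e: "e > 0" for e
  proof -
    obtain g where g: "polynomial_function g" "\<forall>x\<in>S1. norm (G x - g x) < e"
      using Stone_Weierstrass_polynomial_function[OF compS cont e] by blast
    have rg: "real_polynomial_function g" using g(1) real_polynomial_function_eq by blast
    have tg: "trigp (\<lambda>t. complex_of_real (g (cis t)))" by (rule trigp_poly[OF rg])
    have contg: "continuous_on {0..2*pi} (\<lambda>t. g (cis t))"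
      by (rule continuous_on_compose2[OF continuous_on_polymonial_function[OF g(1)]])
         (auto intro!: continuous_intros)
    have iGg: "(\<lambda>t. G (cis t) * g (cis t)) integrable_on {0..2*pi}"
      by (intro integrable_continuous_interval continuous_intros contG contg)
    have c0: "integral {0..2*pi} (\<lambda>t. complex_of_real (G (cis t)) * complex_of_real (g (cis t))) = 0"
      by (rule trigp_orth[OF contG fc tg])
    have "((\<lambda>t. complex_of_real (G (cis t) * g (cis t))) has_integral
           complex_of_real (integral {0..2*pi} (\<lambda>t. G (cis t) * g (cis t)))) {0..2*pi}"
      by (rule has_integral_of_real[OF integrable_integral[OF iGg]])
    then have "complex_of_real (integral {0..2*pi} (\<lambda>t. G (cis t) * g (cis t))) = 0"
      using c0 by (simp add: integral_unique)
    then have o: "integral {0..2*pi} (\<lambda>t. G (cis t) * g (cis t)) = 0" by simp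
    have iGd: "(\<lambda>t. G (cis t) * (G (cis t) - g (cis t))) integrable_on {0..2*pi}"
      by (intro integrable_continuous_interval continuous_intros contG contg)
    have "J = integral {0..2*pi} (\<lambda>t. G (cis t) * G (cis t) - G (cis t) * g (cis t))"
      unfolding J_def integral_diff[OF iGG iGg] o by simp
    also have "\<dots> = integral {0..2*pi} (\<lambda>t. G (cis t) * (G (cis t) - g (cis t)))"
      by (simp add: right_diff_distrib)
    also have "\<dots> \<le> integral {0..2*pi} (\<lambda>t. B * e)"
    proof (rule integral_le[OF iGd])
      show "(\<lambda>t. B * e) integrable_on {0..2*pi}" by (rule integrable_continuous_interval) (rule continuous_on_const)
      fix t assume "t \<in> {0..2*pi::real}"
      have a1: "\<bar>G (cis t)\<bar> \<le> B" using B(2)[OF cisS1] .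
      have a2: "\<bar>G (cis t) - g (cis t)\<bar> \<le> e" using g(2) cisS1[of t] by force
      have "G (cis t) * (G (cis t) - g (cis t)) \<le> \<bar>G (cis t)\<bar> * \<bar>G (cis t) - g (cis t)\<bar>"
        by (metis abs_ge_self abs_mult)
      also have "\<dots> \<le> B * e" by (rule mult_mono[OF a1 a2]) (use B(1) in auto)
      finally show "G (cis t) * (G (cis t) - g (cis t)) \<le> B * e" .
    qed
    also have "\<dots> = 2*pi*B*e" by simp
    finally show ?thesis .
  qed
  have "J \<le> 0"
  proof (rule field_le_epsilon)
    fix e :: real assume e: "e > 0"
    have "J \<le> 2*pi*B*(e / (2*pi*B))" using Jle[of "e / (2*pi*B)"] e B(1) by simp
    then show "J \<le> 0 + e" using B(1) by simp
  qed
  moreover have "J \<ge> 0" unfolding J_def by (rule integral_nonneg[OF iGG]) simp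
  ultimately have "J = 0" by simp
  then have hi: "((\<lambda>t. G (cis t) * G (cis t)) has_integral 0) (cbox 0 (2*pi))"
    using iGG unfolding J_def by (simp add: has_integral_integral)
  obtain t where t: "t \<in> {0..2*pi}" "z = cis t" using S1_cis[OF z] by blast
  have "G (cis t) * G (cis t) = 0"
  proof (rule has_integral_0_cbox_imp_0[OF _ _ hi])
    show "continuous_on (cbox 0 (2*pi)) (\<lambda>t. G (cis t) * G (cis t))"
      by (simp, intro continuous_intros contG)
    show "box 0 (2*pi) \<noteq> {}" using pi_gt_zero by (simp add: not_le)
    show "t \<in> cbox 0 (2*pi)" using t by simp
  qed simp
  then show ?thesis using t by simp
qed



lemma fc_zero:
  assumes "trig_n n F" "\<bar>k\<bar> \<ge> int n"
    and "\<And>t. F (cis t) * cis (- (of_int k * t)) = H t"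
  shows "integral {0..2*pi} H = 0"
proof -
  have "fourier_coeff F k = 0" using assms(1,2) unfolding trig_n_def by blast
  then have "integral {0..2*pi} (\<lambda>t. F (cis t) * cis (- (of_int k * t))) = 0"
    unfolding fourier_coeff_def by simp
  moreover have "(\<lambda>t. F (cis t) * cis (- (of_int k * t))) = H" using assms(3) by (rule ext)
  ultimately show ?thesis by simp
qed

theorem proposition7p9:
  fixes n :: nat and y w :: "complex \<Rightarrow> nat \<Rightarrow> nat \<Rightarrow> complex"
  assumes "pos_cone n y" and "pos_cone n w"
    and "\<forall>z\<in>S1. \<forall>i<n. \<forall>j<n. xi z i j = y z i j + w z i j"
  shows "\<exists>c::real. 0 \<le> c \<and> c \<le> 1 \<and>
    (\<forall>z\<in>S1. \<forall>i<n. \<forall>j<n. w z i j = complex_of_real c * xi z i j \<and>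
                          y z i j = complex_of_real (1 - c) * xi z i j)"
proof (cases n)
  case 0
  then show ?thesis by (intro exI[of _ 0]) simp
next
  case (Suc N)
  note py = assms(1) and pw = assms(2) and sm = assms(3)
  have n0: "0 < n" using Suc by simp
  have N: "N < n" "0 < n" using Suc by auto
  have cisS1: "cis t \<in> S1" for t by (simp add: S1_def)
  define C where "C z = Re (w z 0 0)" for z
  have wC: "w z 0 0 = complex_of_real (C z)" if "z \<in> S1" for z
    using pointwise_c[OF py pw sm that n0] unfolding C_def by simp
  have tr00: "trig_n n (\<lambda>z. w z 0 0)" and trN0: "trig_n n (\<lambda>z. w z N 0)" and tr0N: "trig_n n (\<lambda>z. w z 0 N)"
    using pw N unfolding pos_cone_def by auto
  have contw: "continuous_on S1 (\<lambda>z. w z 0 0)" using tr00 unfolding trig_n_def by blast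
  have contC: "continuous_on S1 C"
  proof -
    have "continuous_on S1 (\<lambda>z. Re (w z 0 0))" using contw by (intro continuous_intros)
    then show ?thesis unfolding C_def by simp
  qed
  have xiN0: "xi (cis t) N 0 = cis (- (of_int (int N) * t))" for t
    unfolding xi_def cis_power_int by simp
  have xi0N: "xi (cis t) 0 N = cis (of_int (int N) * t)" for t
    unfolding xi_def cis_power_int by simp
  have key: "integral {0..2*pi} (\<lambda>t. complex_of_real (C (cis t)) * cis (of_int m * t)) = 0"
    if m0: "m \<noteq> 0" for m :: int
  proof (cases "m > 0")
    case True
    show ?thesis
    proof (rule fc_zero[OF trN0, of "- (m + int N)"])
      show "int n \<le> \<bar>- (m + int N)\<bar>" using True Suc by simp
      fix t
      have "w (cis t) N 0 = w (cis t) 0 0 * xi (cis t) N 0"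
        by (rule pointwise[OF py pw sm cisS1 N(1) N(2)])
      then have "w (cis t) N 0 = complex_of_real (C (cis t)) * cis (- (of_int (int N) * t))"
        using wC[OF cisS1] xiN0 by simp
      moreover have "cis (- (of_int (int N) * t)) * cis (- (of_int (- (m + int N)) * t)) = cis (of_int m * t)"
        by (simp add: cis_mult algebra_simps)
      ultimately show "w (cis t) N 0 * cis (- (of_int (- (m + int N)) * t)) = complex_of_real (C (cis t)) * cis (of_int m * t)"
        by (simp add: mult.assoc)
    qed
  next
    case False
    then have mneg: "m < 0" using m0 by simp
    show ?thesis
    proof (rule fc_zero[OF tr0N, of "int N - m"])
      show "int n \<le> \<bar>int N - m\<bar>" using mneg Suc by simp
      fix t
      have "w (cis t) 0 N = w (cis t) 0 0 * xi (cis t) 0 N"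
        by (rule pointwise[OF py pw sm cisS1 N(2) N(1)])
      then have "w (cis t) 0 N = complex_of_real (C (cis t)) * cis (of_int (int N) * t)"
        using wC[OF cisS1] xi0N by simp
      moreover have "cis (of_int (int N) * t) * cis (- (of_int (int N - m) * t)) = cis (of_int m * t)"
        by (simp add: cis_mult algebra_simps)
      ultimately show "w (cis t) 0 N * cis (- (of_int (int N - m) * t)) = complex_of_real (C (cis t)) * cis (of_int m * t)"
        by (simp add: mult.assoc)
    qed
  qed
  define I0 where "I0 = integral {0..2*pi} (\<lambda>t. C (cis t))"
  define C0 where "C0 = I0 / (2*pi)"
  have contCc: "continuous_on {0..2*pi} (\<lambda>t. C (cis t))"
    by (rule continuous_on_compose2[OF contC]) (auto intro!: continuous_intros simp: cisS1)
  have GC: "C z - C0 = 0" if z: "z \<in> S1" for z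
  proof (rule uniq[where G = "\<lambda>z. C z - C0", OF _ _ z])
    show "continuous_on S1 (\<lambda>z. C z - C0)" using contC by (intro continuous_intros)
    fix m :: int
    show "integral {0..2*pi} (\<lambda>t. complex_of_real (C (cis t) - C0) * cis (of_int m * t)) = 0"
    proof (cases "m = 0")
      case True
      have iC: "(\<lambda>t. C (cis t) - C0) integrable_on {0..2*pi}"
        by (intro integrable_continuous_interval continuous_intros contCc)
      have "integral {0..2*pi} (\<lambda>t. C (cis t) - C0) = I0 - 2*pi*C0"
        unfolding I0_def
        by (subst integral_diff) (auto intro!: integrable_continuous_interval contCc)
      also have "\<dots> = 0" unfolding C0_def by simp
      finally have r0: "integral {0..2*pi} (\<lambda>t. C (cis t) - C0) = 0" .
      have "((\<lambda>t. complex_of_real (C (cis t) - C0)) has_integral complex_of_real 0) {0..2*pi}"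
        using has_integral_of_real[OF integrable_integral[OF iC]] unfolding r0 .
      then show ?thesis using True by (simp add: integral_unique)
    next
      case False
      have i1: "(\<lambda>t. complex_of_real (C (cis t)) * cis (of_int m * t)) integrable_on {0..2*pi}"
        by (intro integrable_continuous_interval continuous_intros contCc)
      have i2: "(\<lambda>t. complex_of_real C0 * cis (of_int m * t)) integrable_on {0..2*pi}"
        by (intro integrable_continuous_interval continuous_intros)
      have "(\<lambda>t. complex_of_real (C (cis t) - C0) * cis (of_int m * t)) =
            (\<lambda>t. complex_of_real (C (cis t)) * cis (of_int m * t) - complex_of_real C0 * cis (of_int m * t))"
        by (simp add: algebra_simps)
      then have "integral {0..2*pi} (\<lambda>t. complex_of_real (C (cis t) - C0) * cis (of_int m * t)) =
          integral {0..2*pi} (\<lambda>t. complex_of_real (C (cis t)) * cis (of_int m * t))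
          - complex_of_real C0 * integral {0..2*pi} (\<lambda>t. cis (of_int m * t))"
        using integral_diff[OF i1 i2] by simp
      also have "\<dots> = 0" using key[OF False] integral_unique[OF int_cis[OF False]] by simp
      finally show ?thesis .
    qed
  qed
  have one: "(1::complex) \<in> S1" by (simp add: S1_def)
  have b: "0 \<le> C 1" "C 1 \<le> 1" using pointwise_c[OF py pw sm one n0] unfolding C_def by auto
  have C1: "C 1 = C0" using GC[OF one] by simp
  show ?thesis
  proof (intro exI[of _ C0] conjI ballI allI impI)
    show "0 \<le> C0" "C0 \<le> 1" using b C1 by auto
    fix z i j assume z: "z \<in> S1" and ij: "i < n" "j < n"
    have wz: "w z i j = complex_of_real C0 * xi z i j"
      using pointwise[OF py pw sm z ij] wC[OF z] GC[OF z] by simp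
    then show "w z i j = complex_of_real C0 * xi z i j" .
    have "xi z i j = y z i j + w z i j" using sm z ij by blast
    then show "y z i j = complex_of_real (1 - C0) * xi z i j"
      using wz by (simp add: algebra_simps)
  qed
qed


end
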